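(* Let $p$ be any sensible $\lambda$-PPM on the set $\Lambda$ of $\lambda$-terms, and let $p_{\mathrm{ctx}}$ be the contextual partial metric defined from an arbitrary enumeration $(\mathtt C_n[-])_{n\in\mathbb N}$ of all contexts by $p_{\mathrm{ctx}}(M,N)=\sum\{2^{-n}\mid \mathtt C_n[M]\text{ unsolvable or }\mathtt C_n[N]\text{ unsolvable}\}$. Then $p\sqsubseteq p_{\mathrm{ctx}}$, i.e. $\mathcal O_{p_{\mathrm{ctx}}}(\Lambda)\subseteq\mathcal O_p(\Lambda)$.
   Context: Contexts are $\lambda$-terms with one hole; solvable means having a head normal form. A partial pseudo-metric (PPM) on $X$ is $p:X\times X\to[0,+\infty]$ with $p(x,x)\leq p(x,y)$, $p(x,y)=p(y,x)$, $p(x,y)\leq p(x,z)+p(z,y)-p(z,z)$. Preorder: $x\leq_p y$ iff $p(x,y)\leq p(x,x)$; $x\simeq_p y$ iff $x\leq_p y$ and $y\leq_p x$. Open balls $B^p_\epsilon(x)=\{y\mid p(y,x)<p(x,x)+\epsilon\}$, and $\mathcal O_p(X)$ is the topology of unions of open balls. For PPMs $p,p'$ on $X$, $p\sqsubseteq p'$ means $\mathcal O_{p'}(X)\subseteq\mathcal O_p(X)$. A $\lambda$-theory is an equivalence on $\Lambda$ closed under application on both sides and under $\lambda$-abstraction and containing $\beta$-conversion. A $\lambda$-PPM is a PPM $p$ on $\Lambda$ such that $\simeq_p$ is a $\lambda$-theory and every context $\mathtt C[-]$ induces a map $\Lambda\to\Lambda$ continuous for $\mathcal O_p(\Lambda)$.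 It is sensible if every unsolvable term $M$ satisfies $M\leq_p N$ for all $N$, and no solvable term has this property. *)

theory Defs
  imports Main "HOL-Library.Extended_Nonnegative_Real"
begin

datatype lterm = Var nat | App lterm lterm | Abs lterm

primrec lift :: "lterm \<Rightarrow> nat \<Rightarrow> lterm" where
  "lift (Var i) k = (if i < k then Var i else Var (Suc i))"
| "lift (App s t) k = App (lift s k) (lift t k)"
| "lift (Abs s) k = Abs (lift s (Suc k))"

primrec subst :: "lterm \<Rightarrow> lterm \<Rightarrow> nat \<Rightarrow> lterm" where
  "subst (Var i) t k = (if k < i then Var (i - 1) else if i = k then t else Var i)"
| "subst (App s u) t k = App (subst s t k) (subst u t k)"
| "subst (Abs s) t k = Abs (subst s (lift t 0) (Suc k))"

inductive beta :: "lterm \<Rightarrow> lterm \<Rightarrow> bool" where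
  beta_redex: "beta (App (Abs s) t) (subst s t 0)"
| beta_appL: "beta s s' \<Longrightarrow> beta (App s t) (App s' t)"
| beta_appR: "beta t t' \<Longrightarrow> beta (App s t) (App s t')"
| beta_abs: "beta s s' \<Longrightarrow> beta (Abs s) (Abs s')"

definition beta_conv :: "lterm \<Rightarrow> lterm \<Rightarrow> bool" where
  "beta_conv = equivclp beta"

text \<open>Head normal forms: \<open>\<lambda>x1...xn. y M1 ... Mk\<close>\<close>
inductive head_app :: "lterm \<Rightarrow> bool" where
  "head_app (Var i)"
| "head_app s \<Longrightarrow> head_app (App s t)"

inductive hnf :: "lterm \<Rightarrow> bool" where
  "head_app s \<Longrightarrow> hnf s"
| "hnf s \<Longrightarrow> hnf (Abs s)"

definition solvable :: "lterm \<Rightarrow> bool" where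
  "solvable M \<longleftrightarrow> (\<exists>N. beta_conv M N \<and> hnf N)"

datatype ctx = Hole | CAppL ctx lterm | CAppR lterm ctx | CAbs ctx

primrec plug :: "ctx \<Rightarrow> lterm \<Rightarrow> lterm" where
  "plug Hole M = M"
| "plug (CAppL C t) M = App (plug C M) t"
| "plug (CAppR t C) M = App t (plug C M)"
| "plug (CAbs C) M = Abs (plug C M)"

definition ppm :: "('a \<Rightarrow> 'a \<Rightarrow> ennreal) \<Rightarrow> bool" where
  "ppm p \<longleftrightarrow>
     (\<forall>x y. p x x \<le> p x y) \<and>
     (\<forall>x y. p x y = p y x) \<and>
     (\<forall>x y z. p x y + p z z \<le> p x z + p z y)"

definition ppm_le :: "('a \<Rightarrow> 'a \<Rightarrow> ennreal) \<Rightarrow> 'a \<Rightarrow> 'a \<Rightarrow> bool" where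
  "ppm_le p x y \<longleftrightarrow> p x y \<le> p x x"

definition ppm_eq :: "('a \<Rightarrow> 'a \<Rightarrow> ennreal) \<Rightarrow> 'a \<Rightarrow> 'a \<Rightarrow> bool" where
  "ppm_eq p x y \<longleftrightarrow> ppm_le p x y \<and> ppm_le p y x"

definition ppm_ball :: "('a \<Rightarrow> 'a \<Rightarrow> ennreal) \<Rightarrow> real \<Rightarrow> 'a \<Rightarrow> 'a set" where
  "ppm_ball p \<epsilon> x = {y. p y x < p x x + ennreal \<epsilon>}"

definition ppm_open :: "('a \<Rightarrow> 'a \<Rightarrow> ennreal) \<Rightarrow> 'a set \<Rightarrow> bool" where
  "ppm_open p U \<longleftrightarrow>
     (\<exists>S. S \<subseteq> {ppm_ball p \<epsilon> x | \<epsilon> x. \<epsilon> > 0} \<and> U = \<Union>S)"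

definition ppm_below :: "('a \<Rightarrow> 'a \<Rightarrow> ennreal) \<Rightarrow> ('a \<Rightarrow> 'a \<Rightarrow> ennreal) \<Rightarrow> bool" where
  "ppm_below p p' \<longleftrightarrow> (\<forall>U. ppm_open p' U \<longrightarrow> ppm_open p U)"

definition ppm_continuous :: "('a \<Rightarrow> 'a \<Rightarrow> ennreal) \<Rightarrow> ('a \<Rightarrow> 'a) \<Rightarrow> bool" where
  "ppm_continuous p f \<longleftrightarrow> (\<forall>U. ppm_open p U \<longrightarrow> ppm_open p (f -` U))"

definition lambda_theory :: "(lterm \<Rightarrow> lterm \<Rightarrow> bool) \<Rightarrow> bool" where
  "lambda_theory R \<longleftrightarrow>
     equivp R \<and>
     (\<forall>M N Z. R M N \<longrightarrow> R (App M Z) (App N Z)) \<and>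
     (\<forall>M N Z. R M N \<longrightarrow> R (App Z M) (App Z N)) \<and>
     (\<forall>M N. R M N \<longrightarrow> R (Abs M) (Abs N)) \<and>
     (\<forall>M N. beta_conv M N \<longrightarrow> R M N)"

definition lambda_ppm :: "(lterm \<Rightarrow> lterm \<Rightarrow> ennreal) \<Rightarrow> bool" where
  "lambda_ppm p \<longleftrightarrow>
     ppm p \<and> lambda_theory (ppm_eq p) \<and> (\<forall>C. ppm_continuous p (plug C))"

definition sensible :: "(lterm \<Rightarrow> lterm \<Rightarrow> ennreal) \<Rightarrow> bool" where
  "sensible p \<longleftrightarrow>
     (\<forall>M. \<not> solvable M \<longrightarrow> (\<forall>N. ppm_le p M N)) \<and>
     (\<forall>M. solvable M \<longrightarrow> \<not> (\<forall>N. ppm_le p M N))"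

definition p_ctx :: "(nat \<Rightarrow> ctx) \<Rightarrow> lterm \<Rightarrow> lterm \<Rightarrow> ennreal" where
  "p_ctx Cs M N =
     (\<Sum>n. if \<not> solvable (plug (Cs n) M) \<or> \<not> solvable (plug (Cs n) N)
          then ennreal ((1/2) ^ n) else 0)"

end

theory Submission
  imports Defs
begin

lemma ennreal_fin: "(u::ennreal) < top \<Longrightarrow> \<exists>a\<ge>0. u = ennreal a"
  by (cases u) auto

lemma ball_sub:
  assumes pp: "ppm p" and y: "y \<in> ppm_ball p \<epsilon> x"
  shows "p y y < top \<and> (\<exists>\<delta>>0. ppm_ball p \<delta> y \<subseteq> ppm_ball p \<epsilon> x)"
proof -
  have r1: "\<And>x y. p x x \<le> p x y" and r2: "\<And>x y. p x y = p y x"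
    and r3: "\<And>x y z. p x y + p z z \<le> p x z + p z y" using pp unfolding ppm_def by auto
  have yx: "p y x < p x x + ennreal \<epsilon>" using y unfolding ppm_ball_def by auto
  have xy: "p x x \<le> p y x" using r1[of x y] r2[of x y] by simp
  have epos: "\<epsilon> > 0"
  proof (rule ccontr)
    assume "\<not> \<epsilon> > 0"
    hence "ennreal \<epsilon> = 0" by (simp add: ennreal_eq_0_iff)
    thus False using yx xy by simp
  qed
  have xxf: "p x x < top"
  proof (rule ccontr)
    assume "\<not> p x x < top"
    hence "p x x = top" using top.not_eq_extremum by blast
    thus False using yx xy by simp
  qed
  have yxf: "p y x < top" using yx xxf order.strict_trans ennreal_add_less_top ennreal_less_top by blast
  have yyf: "p y y < top" using r1[of y x] yxf by auto
  obtain a where a: "p x x = ennreal a" "a \<ge> 0" using xxf ennreal_fin by blast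
  obtain b where b: "p y x = ennreal b" "b \<ge> 0" using yxf ennreal_fin by blast
  obtain c where c: "p y y = ennreal c" "c \<ge> 0" using yyf ennreal_fin by blast
  have ae: "ennreal a + ennreal \<epsilon> = ennreal (a + \<epsilon>)" using a epos by simp
  have ba: "b < a + \<epsilon>" using yx a b ae ennreal_less_iff by simp
  define \<delta> where "\<delta> = a + \<epsilon> - b"
  have dpos: "\<delta> > 0" using ba \<delta>_def by simp
  have "ppm_ball p \<delta> y \<subseteq> ppm_ball p \<epsilon> x"
  proof
    fix z assume "z \<in> ppm_ball p \<delta> y"
    hence zy0: "p z y < ennreal c + ennreal \<delta>" unfolding ppm_ball_def using c by simp
    have cd: "ennreal c + ennreal \<delta> = ennreal (c + \<delta>)" using c dpos by simp
    have zy: "p z y < ennreal (c + \<delta>)" using zy0 cd by simp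
    hence zyf: "p z y < top" using ennreal_less_top order.strict_trans by blast
    obtain d where d: "p z y = ennreal d" "d \<ge> 0" using zyf ennreal_fin by blast
    have tri: "p z x + p y y \<le> p z y + p y x" using r3[of z x y] .
    have db: "p z y + p y x = ennreal (d + b)" using d b by simp
    have zxf: "p z x < top"
    proof -
      have "p z x \<le> p z x + p y y" by simp
      also have "\<dots> \<le> ennreal (d + b)" using tri db by simp
      also have "\<dots> < top" by simp
      finally show ?thesis .
    qed
    obtain e where e: "p z x = ennreal e" "e \<ge> 0" using zxf ennreal_fin by blast
    have "d < c + \<delta>" by (metis zy d(1) d(2) ennreal_less_iff)
    moreover have "ennreal (e + c) \<le> ennreal (d + b)" using tri e c db by simp
    hence "e + c \<le> d + b" using d b by (metis ennreal_le_iff add_nonneg_nonneg)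
    ultimately have "e < a + \<epsilon>" using \<delta>_def by simp
    hence "ennreal e < ennreal (a + \<epsilon>)" using e ennreal_less_iff by simp
    thus "z \<in> ppm_ball p \<epsilon> x" unfolding ppm_ball_def using e ae a by simp
  qed
  thus ?thesis using yyf dpos by blast
qed


lemma open_char:
  assumes pp: "ppm p"
  shows "ppm_open p U \<longleftrightarrow> (\<forall>y\<in>U. p y y < top \<and> (\<exists>\<delta>>0. ppm_ball p \<delta> y \<subseteq> U))"
proof
  assume "ppm_open p U"
  then obtain S where S: "S \<subseteq> {ppm_ball p \<epsilon> x | \<epsilon> x. \<epsilon> > 0}" "U = \<Union>S"
    unfolding ppm_open_def by blast
  show "\<forall>y\<in>U. p y y < top \<and> (\<exists>\<delta>>0. ppm_ball p \<delta> y \<subseteq> U)"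
  proof
    fix y assume "y \<in> U"
    then obtain B where B: "B \<in> S" "y \<in> B" using S(2) by blast
    then have "B \<in> {ppm_ball p \<epsilon> x | \<epsilon> x. \<epsilon> > 0}" using S(1) by blast
    then obtain \<epsilon> x where ex: "B = ppm_ball p \<epsilon> x" by blast
    have BU: "B \<subseteq> U" using B(1) S(2) by blast
    have "p y y < top \<and> (\<exists>\<delta>>0. ppm_ball p \<delta> y \<subseteq> ppm_ball p \<epsilon> x)"
      using ball_sub[OF pp, of y \<epsilon> x] B(2) ex by simp
    then show "p y y < top \<and> (\<exists>\<delta>>0. ppm_ball p \<delta> y \<subseteq> U)"
      using BU ex by (meson order_trans)
  qed
next
  assume h: "\<forall>y\<in>U. p y y < top \<and> (\<exists>\<delta>>0. ppm_ball p \<delta> y \<subseteq> U)"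
  define S where "S = {B. B \<subseteq> U \<and> (\<exists>\<epsilon> x. \<epsilon> > 0 \<and> B = ppm_ball p \<epsilon> x)}"
  have "U \<subseteq> \<Union>S"
  proof
    fix y assume y: "y \<in> U"
    then obtain \<delta> where d: "\<delta> > 0" "ppm_ball p \<delta> y \<subseteq> U" using h by blast
    have "p y y < top" using h y by blast
    then obtain c where c: "p y y = ennreal c" "c \<ge> 0" using ennreal_fin by blast
    have "ennreal c < ennreal (c + \<delta>)" using d c ennreal_lessI by simp
    hence "y \<in> ppm_ball p \<delta> y" unfolding ppm_ball_def using c d by simp
    moreover have "ppm_ball p \<delta> y \<in> S" unfolding S_def using d by blast
    ultimately show "y \<in> \<Union>S" by blast
  qed
  moreover have "\<Union>S \<subseteq> U" unfolding S_def by blast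
  ultimately have "U = \<Union>S" by blast
  moreover have "S \<subseteq> {ppm_ball p \<epsilon> x | \<epsilon> x. \<epsilon> > 0}" unfolding S_def by blast
  ultimately show "ppm_open p U" unfolding ppm_open_def by blast
qed

lemma ball_mono:
  assumes "\<delta> \<le> \<epsilon>" shows "ppm_ball p \<delta> y \<subseteq> ppm_ball p \<epsilon> y"
proof
  fix z assume "z \<in> ppm_ball p \<delta> y"
  moreover have "ennreal \<delta> \<le> ennreal \<epsilon>" using assms ennreal_leI by blast
  ultimately show "z \<in> ppm_ball p \<epsilon> y" unfolding ppm_ball_def
    by (metis (no_types, lifting) add_left_mono mem_Collect_eq order_less_le_trans)
qed

lemma open_Int:
  assumes pp: "ppm p" and "ppm_open p U" "ppm_open p V"
  shows "ppm_open p (U \<inter> V)"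
proof -
  have "\<forall>y\<in>U \<inter> V. p y y < top \<and> (\<exists>\<delta>>0. ppm_ball p \<delta> y \<subseteq> U \<inter> V)"
  proof
    fix y assume y: "y \<in> U \<inter> V"
    obtain d1 where d1: "d1 > 0" "ppm_ball p d1 y \<subseteq> U" "p y y < top"
      using y assms open_char[OF pp] by blast
    obtain d2 where d2: "d2 > 0" "ppm_ball p d2 y \<subseteq> V"
      using y assms open_char[OF pp] by blast
    have "ppm_ball p (min d1 d2) y \<subseteq> U \<inter> V"
      using ball_mono[of "min d1 d2" d1 p y] ball_mono[of "min d1 d2" d2 p y] d1 d2 by auto
    thus "p y y < top \<and> (\<exists>\<delta>>0. ppm_ball p \<delta> y \<subseteq> U \<inter> V)" using d1 d2
      by (metis min_less_iff_conj)
  qed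
  thus ?thesis using open_char[OF pp] by blast
qed

lemma solvable_open:
  assumes pp: "ppm p" and s: "sensible p"
  shows "ppm_open p {M. solvable M}"
proof -
  have r1: "\<And>x y. p x x \<le> p x y" and r2: "\<And>x y. p x y = p y x"
    and r3: "\<And>x y z. p x y + p z z \<le> p x z + p z y" using pp unfolding ppm_def by auto
  have uns: "p N Z = p N N" if N: "\<not> solvable N" for N Z
  proof -
    have "p N Z \<le> p N N" using s N unfolding sensible_def ppm_le_def by blast
    thus ?thesis using r1[of N Z] by (rule order_antisym)
  qed
  have sol: "\<And>M. solvable M \<Longrightarrow> \<exists>N. \<not> p M N \<le> p M M"
    using s unfolding sensible_def ppm_le_def by blast
  have solf: "p M M < top" if M: "solvable M" for M
  proof -
    obtain N where "\<not> p M N \<le> p M M" using sol M by blast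
    hence "p M M \<noteq> top" by auto
    thus ?thesis by (simp add: less_top)
  qed
  have "\<forall>M\<in>{M. solvable M}. p M M < top \<and> (\<exists>\<delta>>0. ppm_ball p \<delta> M \<subseteq> {M. solvable M})"
  proof
    fix M assume "M \<in> {M. solvable M}"
    hence M: "solvable M" by simp
    show "p M M < top \<and> (\<exists>\<delta>>0. ppm_ball p \<delta> M \<subseteq> {M. solvable M})"
    proof (cases "\<exists>N0. \<not> solvable N0")
      case False
      thus ?thesis using solf M by (intro conjI exI[of _ "1::real"]) auto
    next
      case True
      then obtain N0 where N0: "\<not> solvable N0" by blast
      define b where "b = p N0 N0"
      have allb: "\<And>N Z. \<not> solvable N \<Longrightarrow> p N Z = b"
      proof -
        fix N Z assume N: "\<not> solvable N"
        have "p N Z = p N N" using uns[OF N] .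
        also have "\<dots> = p N N0" using uns[OF N, of N0] by (rule sym)
        also have "\<dots> = p N0 N" using r2 by simp
        also have "\<dots> = p N0 N0" by (rule uns[OF N0])
        finally show "p N Z = b" using b_def by simp
      qed
      have Mb: "p M M < b"
      proof (rule ccontr)
        assume "\<not> p M M < b"
        moreover have "p M M \<le> b" using r1[of M N0] r2[of M N0] allb[OF N0] by simp
        ultimately have eq: "p M M = b" by simp
        obtain N' where N': "\<not> p M N' \<le> p M M" using sol M by blast
        have "p M N' + b \<le> b + b" using r3[of M N' N0] allb[OF N0] r2[of M N0] by simp
        moreover have "b < top" using eq solf[OF M] by simp
        ultimately have "p M N' \<le> b"
          using ennreal_add_left_cancel_le[of b "p M N'" b] by (auto simp add: add.commute)
        thus False using N' eq by simp
      qed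
      obtain c where c: "p M M = ennreal c" "c \<ge> 0" using solf M ennreal_fin by blast
      show ?thesis
      proof (cases "b = top")
        case True
        have "ppm_ball p 1 M \<subseteq> {M. solvable M}"
        proof
          fix N assume "N \<in> ppm_ball p 1 M"
          hence "p N M < p M M + 1" unfolding ppm_ball_def by simp
          thus "N \<in> {M. solvable M}" using allb True c by (cases "solvable N") auto
        qed
        thus ?thesis using solf M zero_less_one by blast
      next
        case False
        then obtain bb where bb: "b = ennreal bb" "bb \<ge> 0" using ennreal_fin top.not_eq_extremum by blast
        have cb: "c < bb" using Mb c bb ennreal_less_iff by simp
        have "ppm_ball p (bb - c) M \<subseteq> {M. solvable M}"
        proof
          fix N assume "N \<in> ppm_ball p (bb - c) M"
          hence "p N M < ennreal c + ennreal (bb - c)" unfolding ppm_ball_def using c by simp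
          also have "\<dots> = b" using bb c cb by (simp flip: ennreal_plus)
          finally show "N \<in> {M. solvable M}" using allb by (cases "solvable N") auto
        qed
        moreover have "bb - c > 0" using cb by simp
        ultimately show ?thesis using solf M by blast
      qed
    qed
  qed
  thus ?thesis using open_char[OF pp] by blast
qed


lemma plug_open:
  assumes "lambda_ppm p" "sensible p"
  shows "ppm_open p {z. solvable (plug C z)}"
proof -
  have pp: "ppm p" and c: "ppm_continuous p (plug C)" using assms(1) unfolding lambda_ppm_def by auto
  have "ppm_open p (plug C -` {M. solvable M})"
    using c solvable_open[OF pp assms(2)] unfolding ppm_continuous_def by blast
  thus ?thesis by (simp add: vimage_def)
qed

lemma all_fin:
  assumes "lambda_ppm p" "sensible p"
  shows "p y y < top"
proof -
  have pp: "ppm p" using assms(1) unfolding lambda_ppm_def by auto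
  have "\<And>z. solvable (plug (CAppR (Abs (Abs (Var 0))) Hole) z)"
  proof -
    fix z
    have "beta (App (Abs (Abs (Var 0))) z) (subst (Abs (Var 0)) z 0)" by (rule beta_redex)
    hence "beta_conv (App (Abs (Abs (Var 0))) z) (Abs (Var 0))" unfolding beta_conv_def by auto
    moreover have "hnf (Abs (Var 0))" by (intro hnf.intros head_app.intros)
    ultimately show "solvable (plug (CAppR (Abs (Abs (Var 0))) Hole) z)"
      unfolding solvable_def by auto
  qed
  hence "{z. solvable (plug (CAppR (Abs (Abs (Var 0))) Hole) z)} = UNIV" by auto
  hence "ppm_open p UNIV" using plug_open[OF assms, of "CAppR (Abs (Abs (Var 0))) Hole"] by simp
  thus ?thesis using open_char[OF pp] by blast
qed

lemma W_open:
  fixes K :: nat and Cs :: "nat \<Rightarrow> ctx"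
  assumes "lambda_ppm p" "sensible p"
  shows "ppm_open p {z. \<forall>n<K. P n \<longrightarrow> solvable (plug (Cs n) z)}"
proof (induction K)
  case 0
  have pp: "ppm p" using assms(1) unfolding lambda_ppm_def by auto
  have "\<forall>y\<in>UNIV. p y y < top \<and> (\<exists>\<delta>>0. ppm_ball p \<delta> y \<subseteq> UNIV)"
    using all_fin[OF assms] zero_less_one by blast
  hence "ppm_open p UNIV" using open_char[OF pp] by blast
  thus ?case by simp
next
  case (Suc K)
  have pp: "ppm p" using assms(1) unfolding lambda_ppm_def by auto
  show ?case
  proof (cases "P K")
    case True
    have "{z. \<forall>n<Suc K. P n \<longrightarrow> solvable (plug (Cs n) z)} =
      {z. \<forall>n<K. P n \<longrightarrow> solvable (plug (Cs n) z)} \<inter> {z. solvable (plug (Cs K) z)}"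
      using True less_Suc_eq by auto
    thus ?thesis using open_Int[OF pp Suc plug_open[OF assms]] by simp
  next
    case False
    have "{z. \<forall>n<Suc K. P n \<longrightarrow> solvable (plug (Cs n) z)} =
      {z. \<forall>n<K. P n \<longrightarrow> solvable (plug (Cs n) z)}"
      using False less_Suc_eq by auto
    thus ?thesis using Suc by simp
  qed
qed

definition AA :: "(nat \<Rightarrow> ctx) \<Rightarrow> lterm \<Rightarrow> lterm \<Rightarrow> nat \<Rightarrow> real" where
  "AA Cs z w n = (if \<not> solvable (plug (Cs n) z) \<or> \<not> solvable (plug (Cs n) w) then (1/2)^n else 0)"

lemma AA_bound: "0 \<le> AA Cs z w n" "AA Cs z w n \<le> (1/2)^n"
  unfolding AA_def by auto

lemma AA_summable: "summable (AA Cs z w)"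
  by (rule summable_comparison_test[of _ "\<lambda>n. (1/2::real)^n"])
     (use AA_bound in auto)

lemma p_ctx_AA: "p_ctx Cs z w = ennreal (suminf (AA Cs z w))"
proof -
  have "p_ctx Cs z w = (\<Sum>n. ennreal (AA Cs z w n))"
    unfolding p_ctx_def AA_def by (intro suminf_cong) auto
  also have "\<dots> = ennreal (suminf (AA Cs z w))"
    by (rule suminf_ennreal2) (use AA_bound AA_summable in auto)
  finally show ?thesis .
qed

lemma tail_sum: "(\<lambda>n. if K \<le> n then (1/2::real)^n else 0) sums (2 * (1/2)^K)"
proof -
  have g: "(\<lambda>n. (1/2::real)^n) sums 2" using geometric_sums[of "1/2::real"] by simp
  have "(\<lambda>n. (1/2::real)^K * (1/2)^n) sums ((1/2)^K * 2)" by (rule sums_mult[OF g])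
  hence "(\<lambda>n. (\<lambda>n. if K \<le> n then (1/2::real)^n else 0) (n + K)) sums ((1/2)^K * 2)"
    by (simp add: power_add mult.commute)
  hence "(\<lambda>n. if K \<le> n then (1/2::real)^n else 0) sums ((1/2)^K * 2 + (\<Sum>i<K. (\<lambda>n. if K \<le> n then (1/2::real)^n else 0) i))"
    using sums_iff_shift by blast
  thus ?thesis by (simp add: mult.commute)
qed

theorem mainTheorem3:
  fixes p :: "lterm \<Rightarrow> lterm \<Rightarrow> ennreal" and Cs :: "nat \<Rightarrow> ctx"
  assumes "lambda_ppm p" and "sensible p" and "bij Cs"
  shows "ppm_below p (p_ctx Cs)"
  unfolding ppm_below_def
proof (intro allI impI)
  fix U assume "ppm_open (p_ctx Cs) U"
  then obtain S where S: "S \<subseteq> {ppm_ball (p_ctx Cs) \<epsilon> x | \<epsilon> x. \<epsilon> > 0}" "U = \<Union>S"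
    unfolding ppm_open_def by blast
  have pp: "ppm p" using assms(1) unfolding lambda_ppm_def by auto
  have "\<forall>y\<in>U. p y y < top \<and> (\<exists>\<delta>>0. ppm_ball p \<delta> y \<subseteq> U)"
  proof
    fix y assume "y \<in> U"
    then obtain \<epsilon> x where ex: "\<epsilon> > 0" "y \<in> ppm_ball (p_ctx Cs) \<epsilon> x" "ppm_ball (p_ctx Cs) \<epsilon> x \<subseteq> U"
      using S by blast
    define sx where "sx = suminf (AA Cs x x)"
    define sy where "sy = suminf (AA Cs y x)"
    have sx0: "sx \<ge> 0" unfolding sx_def using AA_bound AA_summable suminf_nonneg by blast
    have "ennreal sy < ennreal sx + ennreal \<epsilon>"
      using ex(2) unfolding ppm_ball_def sx_def sy_def p_ctx_AA by simp
    also have "\<dots> = ennreal (sx + \<epsilon>)" using sx0 ex(1) by simp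
    finally have "sy < sx + \<epsilon>" using ennreal_less_iff
      by (metis AA_bound(1) AA_summable suminf_nonneg sy_def)
    hence "sx + \<epsilon> - sy > 0" by simp
    then obtain K where K: "(1/2::real)^K < (sx + \<epsilon> - sy) / 2"
      using real_arch_pow_inv[of "(sx + \<epsilon> - sy) / 2" "1/2::real"] by auto
    define W where "W = {z. \<forall>n<K. solvable (plug (Cs n) y) \<longrightarrow> solvable (plug (Cs n) z)}"
    have Wo: "ppm_open p W" unfolding W_def by (rule W_open[OF assms(1,2)])
    have yW: "y \<in> W" unfolding W_def by simp
    have WU: "W \<subseteq> U"
    proof
      fix z assume z: "z \<in> W"
      define c where "c = (\<lambda>n. if K \<le> n then (1/2::real)^n else 0)"
      have le: "AA Cs z x n \<le> AA Cs y x n + c n" for n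
      proof (cases "K \<le> n")
        case True thus ?thesis using AA_bound[of Cs z x n] AA_bound[of Cs y x n] c_def by simp
      next
        case False
        thus ?thesis using z unfolding W_def AA_def c_def by auto
      qed
      have cs: "c sums (2 * (1/2)^K)" unfolding c_def by (rule tail_sum)
      have "suminf (AA Cs z x) \<le> suminf (\<lambda>n. AA Cs y x n + c n)"
        by (rule suminf_le[OF le AA_summable]) (use AA_summable cs summable_add sums_summable in blast)
      also have "\<dots> = sy + 2 * (1/2)^K"
        using suminf_add[OF AA_summable sums_summable[OF cs]] cs sums_unique sy_def by metis
      finally have "suminf (AA Cs z x) < sx + \<epsilon>" using K by simp
      hence "ennreal (suminf (AA Cs z x)) < ennreal (sx + \<epsilon>)"
        using ennreal_less_iff AA_bound(1) AA_summable suminf_nonneg by metis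
      also have "\<dots> = ennreal sx + ennreal \<epsilon>" using sx0 ex(1) by simp
      finally have "z \<in> ppm_ball (p_ctx Cs) \<epsilon> x"
        unfolding ppm_ball_def sx_def p_ctx_AA by simp
      thus "z \<in> U" using ex(3) by blast
    qed
    obtain d where "d > 0" "ppm_ball p d y \<subseteq> W" "p y y < top"
      using Wo yW open_char[OF pp] by blast
    thus "p y y < top \<and> (\<exists>\<delta>>0. ppm_ball p \<delta> y \<subseteq> U)" using WU by blast
  qed
  thus "ppm_open p U" using open_char[OF pp] by blast
qed

end
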